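(* Let $(R,\mathfrak m)$ be a noetherian local ring and $x\in R$. Then $$\operatorname{Att}_R(H^1_{xR}(R))=\operatorname{Spec}(R)\setminus V(x),$$ i.e. the set of prime ideals of $R$ not containing $x$.
   Context: $H^1_{xR}(\cdot)$ is the first local cohomology with support in $xR$. For an $R$-module $N$, $\operatorname{Att}_R(N)$ is the set of prime ideals $\mathfrak p$ of $R$ with $\mathfrak p=\operatorname{Ann}_R(N/U)$ for some submodule $U\subseteq N$. *)

theory Defs
  imports Main
begin

definition is_ideal :: "'a::comm_ring_1 set \<Rightarrow> bool" where
  "is_ideal I \<longleftrightarrow> 0 \<in> I \<and> (\<forall>a\<in>I. \<forall>b\<in>I. a + b \<in> I) \<and> (\<forall>r. \<forall>a\<in>I. r * a \<in> I)"

definition prime_ideal :: "'a::comm_ring_1 set \<Rightarrow> bool" where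
  "prime_ideal P \<longleftrightarrow> is_ideal P \<and> P \<noteq> UNIV \<and> (\<forall>a b. a * b \<in> P \<longrightarrow> a \<in> P \<or> b \<in> P)"

definition maximal_ideal :: "'a::comm_ring_1 set \<Rightarrow> bool" where
  "maximal_ideal M \<longleftrightarrow> is_ideal M \<and> M \<noteq> UNIV \<and>
     (\<forall>J. is_ideal J \<and> M \<subseteq> J \<longrightarrow> J = M \<or> J = UNIV)"

definition ideal_gen :: "'a::comm_ring_1 set \<Rightarrow> 'a set" where
  "ideal_gen F = {(\<Sum>f\<in>F. c f * f) | c. True}"

definition noetherian_ring :: "'a::comm_ring_1 itself \<Rightarrow> bool" where
  "noetherian_ring _ \<longleftrightarrow> (\<forall>I::'a set. is_ideal I \<longrightarrow> (\<exists>F. finite F \<and> F \<subseteq> I \<and> I = ideal_gen F))"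

definition local_ring_with_max :: "'a::comm_ring_1 set \<Rightarrow> bool" where
  "local_ring_with_max m \<longleftrightarrow> maximal_ideal m \<and> (\<forall>M. maximal_ideal M \<longrightarrow> M = m)"

definition Spec :: "'a::comm_ring_1 set set" where
  "Spec = {P. prime_ideal P}"

definition V :: "'a::comm_ring_1 \<Rightarrow> 'a set set" where
  "V x = {P \<in> Spec. x \<in> P}"

section \<open>H^1_{xR}(R) via the Cech complex: H^1_{xR}(R) = coker(R \<rightarrow> R_x)\<close>

text \<open>Elements of R_x are fractions a/x^n, represented by pairs (a,n).
  Two pairs represent the same element of R_x / R iff their difference lies
  in the image of R, i.e. a/x^n - b/x^m = c/1 in R_x for some c.\<close>

definition h1_rel :: "'a::comm_ring_1 \<Rightarrow> (('a \<times> nat) \<times> ('a \<times> nat)) set" where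
  "h1_rel x = {((a,n),(b,m)). \<exists>c k. x^k * (x^m * a - x^n * b - x^(n+m) * c) = 0}"

definition H1 :: "'a::comm_ring_1 \<Rightarrow> ('a \<times> nat) set set" where
  "H1 x = UNIV // h1_rel x"

definition h1_zero :: "'a::comm_ring_1 \<Rightarrow> ('a \<times> nat) set" where
  "h1_zero x = h1_rel x `` {(0,0)}"

definition h1_add :: "'a::comm_ring_1 \<Rightarrow> ('a \<times> nat) set \<Rightarrow> ('a \<times> nat) set \<Rightarrow> ('a \<times> nat) set" where
  "h1_add x A B = (\<Union>(a,n)\<in>A. \<Union>(b,m)\<in>B. h1_rel x `` {(x^m * a + x^n * b, n + m)})"

definition h1_smult :: "'a::comm_ring_1 \<Rightarrow> 'a \<Rightarrow> ('a \<times> nat) set \<Rightarrow> ('a \<times> nat) set" where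
  "h1_smult x r A = (\<Union>(a,n)\<in>A. h1_rel x `` {(r * a, n)})"

definition h1_submodule :: "'a::comm_ring_1 \<Rightarrow> ('a \<times> nat) set set \<Rightarrow> bool" where
  "h1_submodule x U \<longleftrightarrow> U \<subseteq> H1 x \<and> h1_zero x \<in> U \<and>
     (\<forall>A\<in>U. \<forall>B\<in>U. h1_add x A B \<in> U) \<and> (\<forall>r. \<forall>A\<in>U. h1_smult x r A \<in> U)"

definition h1_ann_quot :: "'a::comm_ring_1 \<Rightarrow> ('a \<times> nat) set set \<Rightarrow> 'a set" where
  "h1_ann_quot x U = {r. \<forall>A\<in>H1 x. h1_smult x r A \<in> U}"

definition Att_H1 :: "'a::comm_ring_1 \<Rightarrow> 'a set set" where
  "Att_H1 x = {P. prime_ideal P \<and> (\<exists>U. h1_submodule x U \<and> P = h1_ann_quot x U)}"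

end

theory Submission
  imports Defs
begin

lemma ideal_add: "is_ideal I \<Longrightarrow> a \<in> I \<Longrightarrow> b \<in> I \<Longrightarrow> a + b \<in> I"
  by (simp add: is_ideal_def)
lemma ideal_mult: "is_ideal I \<Longrightarrow> a \<in> I \<Longrightarrow> r * a \<in> I"
  by (simp add: is_ideal_def)
lemma ideal_zero: "is_ideal I \<Longrightarrow> 0 \<in> I"
  by (simp add: is_ideal_def)
lemma ideal_diff: "is_ideal I \<Longrightarrow> a \<in> I \<Longrightarrow> b \<in> I \<Longrightarrow> a - b \<in> I"
proof -
  assume "is_ideal I" "a \<in> I" "b \<in> I"
  hence "a + (-1) * b \<in> I" unfolding is_ideal_def by blast
  thus ?thesis by simp
qed
lemma ideal_one: "is_ideal I \<Longrightarrow> 1 \<in> I \<Longrightarrow> I = UNIV"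
  using ideal_mult[of I 1] by auto
lemma ideal_sum: "is_ideal I \<Longrightarrow> (\<forall>f\<in>F. g f \<in> I) \<Longrightarrow> sum g F \<in> I"
proof (induction F rule: infinite_finite_induct)
  case (infinite A) then show ?case by (simp add: ideal_zero)
next
  case empty then show ?case by (simp add: ideal_zero)
next
  case (insert y F) then show ?case by (simp add: ideal_add)
qed

lemma prime_pow: "prime_ideal P \<Longrightarrow> x \<notin> P \<Longrightarrow> x ^ k \<notin> P"
proof (induction k)
  case 0 then show ?case using ideal_one[of P] by (auto simp: prime_ideal_def)
next
  case (Suc k) then show ?case by (auto simp: prime_ideal_def)
qed

lemma prime_cancel: "prime_ideal P \<Longrightarrow> y \<notin> P \<Longrightarrow> y * a \<in> P \<Longrightarrow> a \<in> P"
  by (auto simp: prime_ideal_def)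

lemma exists_max: assumes "is_ideal P" "P \<noteq> UNIV" shows "\<exists>M. maximal_ideal M \<and> P \<subseteq> M"
proof -
  define A where "A = {J. is_ideal J \<and> (1::'a) \<notin> J \<and> P \<subseteq> J}"
  have one: "1 \<notin> P" using assms ideal_one by blast
  have "\<exists>M\<in>A. \<forall>X\<in>A. M \<subseteq> X \<longrightarrow> X = M"
  proof (rule subset_Zorn_nonempty)
    show "A \<noteq> {}" using assms one unfolding A_def by blast
  next
    fix C assume C: "C \<noteq> {}" "subset.chain A C"
    have CA: "C \<subseteq> A" and ch: "\<And>X Y. X \<in> C \<Longrightarrow> Y \<in> C \<Longrightarrow> X \<subseteq> Y \<or> Y \<subseteq> X"
      using C(2) unfolding subset.chain_def by auto
    have "is_ideal (\<Union>C)" unfolding is_ideal_def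
    proof (intro conjI ballI allI)
      show "0 \<in> \<Union>C" using C(1) CA unfolding A_def by (blast intro: ideal_zero)
    next
      fix a b assume "a \<in> \<Union>C" "b \<in> \<Union>C"
      then obtain X Y where XY: "X \<in> C" "Y \<in> C" "a \<in> X" "b \<in> Y" by blast
      have "\<exists>Z\<in>C. a \<in> Z \<and> b \<in> Z" using ch[OF XY(1,2)] XY by blast
      then obtain Z where Z: "Z \<in> C" "a \<in> Z" "b \<in> Z" by blast
      have "is_ideal Z" using Z(1) CA unfolding A_def by blast
      then show "a + b \<in> \<Union>C" using Z ideal_add by blast
    next
      fix r a assume "a \<in> \<Union>C"
      then obtain X where "X \<in> C" "a \<in> X" by blast
      then show "r * a \<in> \<Union>C" using CA unfolding A_def by (auto intro: ideal_mult)
    qed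
    moreover have "1 \<notin> \<Union>C" using CA unfolding A_def by auto
    moreover have "P \<subseteq> \<Union>C" using C(1) CA unfolding A_def by auto
    ultimately show "\<Union>C \<in> A" unfolding A_def by auto
  qed
  then obtain M where M: "M \<in> A" "\<forall>X\<in>A. M \<subseteq> X \<longrightarrow> X = M" by blast
  have "maximal_ideal M" unfolding maximal_ideal_def
  proof (intro conjI allI impI)
    show "is_ideal M" using M unfolding A_def by auto
    show "M \<noteq> UNIV" using M unfolding A_def by auto
    fix J assume J: "is_ideal J \<and> M \<subseteq> J"
    show "J = M \<or> J = UNIV"
    proof (cases "1 \<in> J")
      case True then show ?thesis using J ideal_one by blast
    next
      case False then have "J \<in> A" using J M unfolding A_def by auto
      then show ?thesis using M J by auto
    qed
  qed
  then show ?thesis using M unfolding A_def by auto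
qed


lemma P_sub_m:
  assumes "local_ring_with_max m" "is_ideal P" "P \<noteq> UNIV" shows "P \<subseteq> m"
  using exists_max[OF assms(2,3)] assms(1) unfolding local_ring_with_max_def by blast

lemma krull:
  fixes m P :: "'a::comm_ring_1 set" and x r :: 'a
  assumes noeth: "noetherian_ring TYPE('a)" and loc: "local_ring_with_max m" and xm: "x \<in> m"
    and P: "prime_ideal P" and xP: "x \<notin> P" and H: "\<forall>n. \<exists>c. r - x^n * c \<in> P"
  shows "r \<in> P"
proof (rule ccontr)
  assume rP: "r \<notin> P"
  have PI: "is_ideal P" using P by (simp add: prime_ideal_def)
  from choice[OF H] obtain c where c: "\<And>n. r - x^n * c n \<in> P" by blast
  have cP: "c n \<notin> P" for n
  proof
    assume "c n \<in> P"
    hence "x^n * c n \<in> P" using PI ideal_mult by blast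
    hence "(r - x^n * c n) + x^n * c n \<in> P" using PI c ideal_add by blast
    thus False using rP by simp
  qed
  have step: "c n - x * c (Suc n) \<in> P" for n
  proof -
    have "(r - x^(Suc n) * c (Suc n)) - (r - x^n * c n) \<in> P" using PI c ideal_diff by blast
    moreover have "(r - x^(Suc n) * c (Suc n)) - (r - x^n * c n) = x^n * (c n - x * c (Suc n))"
      by (simp add: algebra_simps)
    ultimately have "x^n * (c n - x * c (Suc n)) \<in> P" by simp
    then show ?thesis using prime_cancel[OF P prime_pow[OF P xP]] by blast
  qed
  define I where "I n = {s. \<exists>t. s - t * c n \<in> P}" for n
  have Iid: "is_ideal (I n)" for n unfolding is_ideal_def I_def
  proof (intro conjI ballI allI; clarsimp?)
    show "\<exists>t. - (t * c n) \<in> P" by (rule exI[of _ 0]) (simp add: ideal_zero PI)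
  next
    fix a b t1 t2 assume "a - t1 * c n \<in> P" "b - t2 * c n \<in> P"
    hence "(a - t1 * c n) + (b - t2 * c n) \<in> P" using PI ideal_add by blast
    hence "a + b - (t1 + t2) * c n \<in> P" by (simp add: algebra_simps)
    thus "\<exists>t. a + b - t * c n \<in> P" by blast
  next
    fix r a t assume "a - t * c n \<in> P"
    hence "r * (a - t * c n) \<in> P" using PI ideal_mult by blast
    hence "r * a - (r * t) * c n \<in> P" by (simp add: algebra_simps)
    thus "\<exists>ta. r * a - ta * c n \<in> P" by blast
  qed
  have Isuc: "I n \<subseteq> I (Suc n)" for n
  proof
    fix s assume "s \<in> I n"
    then obtain t where t: "s - t * c n \<in> P" unfolding I_def by blast
    have "(s - t * c n) + t * (c n - x * c (Suc n)) \<in> P"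
      using t step PI ideal_add ideal_mult by blast
    hence "s - (t * x) * c (Suc n) \<in> P" by (simp add: algebra_simps)
    thus "s \<in> I (Suc n)" unfolding I_def by blast
  qed
  have Imono: "i \<le> j \<Longrightarrow> I i \<subseteq> I j" for i j
    by (rule lift_Suc_mono_le[of I, OF Isuc])
  define J where "J = (\<Union>n. I n)"
  have Jid: "is_ideal J" unfolding is_ideal_def J_def
  proof (intro conjI ballI allI)
    show "0 \<in> (\<Union>n. I n)" using Iid ideal_zero by blast
  next
    fix a b assume "a \<in> (\<Union>n. I n)" "b \<in> (\<Union>n. I n)"
    then obtain i j where "a \<in> I i" "b \<in> I j" by blast
    moreover have "I i \<subseteq> I (max i j)" "I j \<subseteq> I (max i j)" by (simp_all add: Imono)
    ultimately have "a \<in> I (max i j)" "b \<in> I (max i j)" by blast+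
    thus "a + b \<in> (\<Union>n. I n)" using Iid ideal_add by blast
  next
    fix r a assume "a \<in> (\<Union>n. I n)"
    then obtain i where "a \<in> I i" by blast
    thus "r * a \<in> (\<Union>n. I n)" using Iid ideal_mult by blast
  qed
  obtain F where F: "finite F" "F \<subseteq> J" "J = ideal_gen F"
    using noeth Jid unfolding noetherian_ring_def by blast
  have "\<exists>N. F \<subseteq> I N" using F(1,2)
  proof (induction F rule: finite_induct)
    case empty then show ?case by auto
  next
    case (insert f F)
    then obtain N where N: "F \<subseteq> I N" by auto
    from insert obtain i where i: "f \<in> I i" unfolding J_def by auto
    have "I N \<subseteq> I (max N i)" "I i \<subseteq> I (max N i)" by (simp_all add: Imono)
    hence "F \<subseteq> I (max N i)" "f \<in> I (max N i)" using N i by blast+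
    then show ?case by blast
  qed
  then obtain N where N: "F \<subseteq> I N" by blast
  have "ideal_gen F \<subseteq> I N"
  proof
    fix y assume "y \<in> ideal_gen F"
    then obtain d where "y = (\<Sum>f\<in>F. d f * f)" unfolding ideal_gen_def by blast
    have "\<forall>f\<in>F. d f * f \<in> I N" using N ideal_mult[OF Iid[of N]] by blast
    thus "y \<in> I N" using ideal_sum[OF Iid[of N]] \<open>y = _\<close> by simp
  qed
  moreover have "c (Suc N) \<in> J" unfolding J_def I_def
    by (rule UN_I[of "Suc N"]) (auto intro!: exI[of _ 1] simp: ideal_zero PI)
  ultimately have "c (Suc N) \<in> I N" using F(3) by blast
  then obtain t where t: "c (Suc N) - t * c N \<in> P" unfolding I_def by blast
  have "(c (Suc N) - t * c N) + t * (c N - x * c (Suc N)) \<in> P"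
    using t step PI ideal_add ideal_mult by blast
  moreover have "(c (Suc N) - t * c N) + t * (c N - x * c (Suc N)) = c (Suc N) * (1 - t * x)"
    by (simp add: algebra_simps)
  ultimately have "c (Suc N) * (1 - t * x) \<in> P" by simp
  then have "1 - t * x \<in> P" using prime_cancel[OF P cP] by blast
  moreover have "P \<subseteq> m" using P_sub_m[OF loc PI] P by (simp add: prime_ideal_def)
  ultimately have "1 - t * x \<in> m" by blast
  moreover have mI: "is_ideal m" "m \<noteq> UNIV" using loc by (auto simp: local_ring_with_max_def maximal_ideal_def)
  moreover have "t * x \<in> m" using xm mI(1) ideal_mult by blast
  ultimately have "(1 - t * x) + t * x \<in> m" using ideal_add by blast
  hence "1 \<in> m" by simp
  thus False using mI ideal_one by blast
qed


abbreviation cls :: "'a::comm_ring_1 \<Rightarrow> 'a \<times> nat \<Rightarrow> ('a \<times> nat) set" where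
  "cls x p \<equiv> h1_rel x `` {p}"

lemma rel_iff: "((a,n),(b,m)) \<in> h1_rel x \<longleftrightarrow> (\<exists>c k. x^k * (x^m * a - x^n * b - x^(n+m) * c) = 0)"
  by (simp add: h1_rel_def)

lemma equiv_h1: "equiv UNIV (h1_rel x)"
proof (rule equivI)
  have "((a,n),(a,n)) \<in> h1_rel x" for a :: 'a and n
    unfolding rel_iff by (rule exI[of _ 0], rule exI[of _ 0]) simp
  then show "refl (h1_rel x)" unfolding refl_on_def by auto
  show "sym (h1_rel x)" unfolding sym_def
  proof (clarsimp)
    fix a :: 'a and n b m assume "((a,n),(b,m)) \<in> h1_rel x"
    then obtain c k where ck: "x^k * (x^m * a - x^n * b - x^(n+m) * c) = 0" unfolding rel_iff by blast
    have "x^k * (x^n * b - x^m * a - x^(m+n) * (-c)) = - (x^k * (x^m * a - x^n * b - x^(n+m) * c))"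
      by (simp add: algebra_simps)
    with ck have "x^k * (x^n * b - x^m * a - x^(m+n) * (-c)) = 0" by simp
    then show "((b,m),(a,n)) \<in> h1_rel x" unfolding rel_iff by blast
  qed
  show "trans (h1_rel x)" unfolding trans_def
  proof (clarsimp)
    fix a :: 'a and n b m e l
    assume "((a,n),(b,m)) \<in> h1_rel x" "((b,m),(e,l)) \<in> h1_rel x"
    then obtain c k d j where ck: "x^k * (x^m * a - x^n * b - x^(n+m) * c) = 0"
      and dj: "x^j * (x^l * b - x^m * e - x^(m+l) * d) = 0" unfolding rel_iff by blast
    have "x^(k+j+m) * (x^l * a - x^n * e - x^(n+l) * (c+d)) =
       x^(j+l) * (x^k * (x^m * a - x^n * b - x^(n+m) * c)) + x^(k+n) * (x^j * (x^l * b - x^m * e - x^(m+l) * d))"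
      by (simp add: algebra_simps power_add)
    with ck dj show "((a,n),(e,l)) \<in> h1_rel x" unfolding rel_iff by auto
  qed
qed simp

lemma cls_eq: "((a,n),(b,m)) \<in> h1_rel x \<Longrightarrow> cls x (a,n) = cls x (b,m)"
  using equiv_class_eq[OF equiv_h1] by blast

lemma cls_mem: "p \<in> cls x q \<longleftrightarrow> (q,p) \<in> h1_rel x" by simp

lemma cls_self: "p \<in> cls x p"
  using equiv_h1 unfolding equiv_def refl_on_def by blast

lemma rel_sym: "(p,q) \<in> h1_rel x \<Longrightarrow> (q,p) \<in> h1_rel x"
  using equiv_h1 unfolding equiv_def sym_def by blast

lemma rel_trans: "(p,q) \<in> h1_rel x \<Longrightarrow> (q,s) \<in> h1_rel x \<Longrightarrow> (p,s) \<in> h1_rel x"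
  using equiv_h1 unfolding equiv_def trans_def by blast

lemma rel_smult: "((a,n),(a',n')) \<in> h1_rel x \<Longrightarrow> ((r*a,n),(r*a',n')) \<in> h1_rel x"
proof -
  assume "((a,n),(a',n')) \<in> h1_rel x"
  then obtain c k where ck: "x^k * (x^n' * a - x^n * a' - x^(n+n') * c) = 0" unfolding rel_iff by blast
  have "x^k * (x^n' * (r*a) - x^n * (r*a') - x^(n+n') * (r*c)) = r * (x^k * (x^n' * a - x^n * a' - x^(n+n') * c))"
    by (simp add: algebra_simps)
  with ck show ?thesis unfolding rel_iff by auto
qed

lemma rel_add1: "((a,n),(a',n')) \<in> h1_rel x \<Longrightarrow>
   ((x^m*a + x^n*b, n+m),(x^m*a' + x^n'*b, n'+m)) \<in> h1_rel x"
proof -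
  assume "((a,n),(a',n')) \<in> h1_rel x"
  then obtain c k where ck: "x^k * (x^n' * a - x^n * a' - x^(n+n') * c) = 0" unfolding rel_iff by blast
  have "x^k * (x^(n'+m) * (x^m*a + x^n*b) - x^(n+m) * (x^m*a' + x^n'*b) - x^(n+m+(n'+m)) * c)
     = x^(m+m) * (x^k * (x^n' * a - x^n * a' - x^(n+n') * c))"
    by (simp add: algebra_simps power_add)
  with ck show ?thesis unfolding rel_iff by auto
qed

lemma rel_add2: "((b,m),(b',m')) \<in> h1_rel x \<Longrightarrow>
   ((x^m*a + x^n*b, n+m),(x^m'*a + x^n*b', n+m')) \<in> h1_rel x"
  using rel_add1[of b m b' m' x n a] by (simp add: add.commute)

lemma smult_cls: "h1_smult x r (cls x (a,n)) = cls x (r*a, n)"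
proof
  show "h1_smult x r (cls x (a,n)) \<subseteq> cls x (r*a, n)"
  proof
    fix z assume "z \<in> h1_smult x r (cls x (a,n))"
    then obtain a' n' where "((a,n),(a',n')) \<in> h1_rel x" "z \<in> cls x (r*a', n')"
      unfolding h1_smult_def by auto
    thus "z \<in> cls x (r*a, n)" using cls_eq[OF rel_smult] by blast
  qed
  show "cls x (r*a, n) \<subseteq> h1_smult x r (cls x (a,n))"
    unfolding h1_smult_def using cls_self[of "(a,n)" x] by blast
qed

lemma add_cls: "h1_add x (cls x (a,n)) (cls x (b,m)) = cls x (x^m*a + x^n*b, n+m)"
proof
  show "h1_add x (cls x (a,n)) (cls x (b,m)) \<subseteq> cls x (x^m*a + x^n*b, n+m)"
  proof
    fix z assume "z \<in> h1_add x (cls x (a,n)) (cls x (b,m))"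
    then obtain a' n' b' m' where r1: "((a,n),(a',n')) \<in> h1_rel x" and r2: "((b,m),(b',m')) \<in> h1_rel x"
      and z: "z \<in> cls x (x^m'*a' + x^n'*b', n'+m')"
      unfolding h1_add_def by auto
    have "((x^m*a + x^n*b, n+m),(x^m*a' + x^n'*b, n'+m)) \<in> h1_rel x" by (rule rel_add1[OF r1])
    moreover have "((x^m*a' + x^n'*b, n'+m),(x^m'*a' + x^n'*b', n'+m')) \<in> h1_rel x" by (rule rel_add2[OF r2])
    ultimately have "((x^m*a + x^n*b, n+m),(x^m'*a' + x^n'*b', n'+m')) \<in> h1_rel x" by (rule rel_trans)
    thus "z \<in> cls x (x^m*a + x^n*b, n+m)" using z cls_eq by blast
  qed
  show "cls x (x^m*a + x^n*b, n+m) \<subseteq> h1_add x (cls x (a,n)) (cls x (b,m))"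
    unfolding h1_add_def using cls_self[of "(a,n)" x] cls_self[of "(b,m)" x] by blast
qed

lemma H1_cases: "A \<in> H1 x \<Longrightarrow> (\<And>a n. A = cls x (a,n) \<Longrightarrow> thesis) \<Longrightarrow> thesis"
  unfolding H1_def by (auto elim!: quotientE)

lemma cls_H1: "cls x p \<in> H1 x"
  unfolding H1_def by (rule quotientI) simp


definition good :: "'a::comm_ring_1 set \<Rightarrow> 'a \<Rightarrow> 'a \<times> nat \<Rightarrow> bool" where
  "good P x p \<longleftrightarrow> (\<exists>c. fst p - x^(snd p) * c \<in> P)"

lemma good_inv:
  assumes P: "prime_ideal P" and xP: "x \<notin> P" and r: "((a,n),(b,m)) \<in> h1_rel x" and g: "good P x (b,m)"
  shows "good P x (a,n)"
proof -
  have PI: "is_ideal P" using P by (simp add: prime_ideal_def)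
  obtain c k where ck: "x^k * (x^m * a - x^n * b - x^(n+m) * c) = 0" using r unfolding rel_iff by blast
  obtain d where d: "b - x^m * d \<in> P" using g unfolding good_def by auto
  have "x^k * (x^m * a - x^n * b - x^(n+m) * c) \<in> P" using ck ideal_zero[OF PI] by simp
  hence E: "x^m * a - x^n * b - x^(n+m) * c \<in> P" using prime_cancel[OF P prime_pow[OF P xP]] by blast
  have "(x^m * a - x^n * b - x^(n+m) * c) + x^n * (b - x^m * d) \<in> P"
    using E d PI ideal_add ideal_mult by blast
  moreover have "(x^m * a - x^n * b - x^(n+m) * c) + x^n * (b - x^m * d) = x^m * (a - x^n * (d + c))"
    by (simp add: algebra_simps power_add)
  ultimately have "x^m * (a - x^n * (d + c)) \<in> P" by simp
  hence "a - x^n * (d + c) \<in> P" using prime_cancel[OF P prime_pow[OF P xP]] by blast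
  thus ?thesis unfolding good_def by auto
qed

lemma good_cls:
  assumes P: "prime_ideal P" and xP: "x \<notin> P" and g: "good P x q"
  shows "\<forall>p\<in>cls x q. good P x p"
proof
  fix p assume "p \<in> cls x q"
  hence "(p,q) \<in> h1_rel x" using rel_sym by simp
  thus "good P x p" using good_inv[OF P xP] g by (cases p, cases q) auto
qed

lemma div_x: "cls x (a, n) = h1_smult x x (cls x (a, Suc n))"
proof -
  have "((a,n),(x*a, Suc n)) \<in> h1_rel x" unfolding rel_iff
    by (rule exI[of _ 0], rule exI[of _ 0]) (simp add: algebra_simps)
  thus ?thesis using smult_cls cls_eq by metis
qed

theorem corollary2p4:
  fixes m :: "'a::comm_ring_1 set" and x :: 'a
  assumes "noetherian_ring TYPE('a)"
    and "local_ring_with_max m"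
    and "x \<in> m"
  shows "Att_H1 x = Spec - V x"
proof
  show "Att_H1 x \<subseteq> Spec - V x"
  proof
    fix P assume "P \<in> Att_H1 x"
    then obtain U where P: "prime_ideal P" and PU: "P = h1_ann_quot x U" unfolding Att_H1_def by blast
    have "x \<notin> P"
    proof
      assume "x \<in> P"
      have "r \<in> P" for r unfolding PU h1_ann_quot_def
      proof (clarify)
        fix A assume "A \<in> H1 x"
        then obtain a n where A: "A = cls x (a,n)" by (rule H1_cases)
        have "h1_smult x r A = h1_smult x x (cls x (r*a, Suc n))" using A smult_cls div_x by metis
        moreover have "h1_smult x x (cls x (r*a, Suc n)) \<in> U"
          using \<open>x \<in> P\<close> cls_H1 unfolding PU h1_ann_quot_def by blast
        ultimately show "h1_smult x r A \<in> U" by simp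
      qed
      thus False using P unfolding prime_ideal_def by blast
    qed
    thus "P \<in> Spec - V x" using P unfolding Spec_def V_def by blast
  qed
  show "Spec - V x \<subseteq> Att_H1 x"
  proof
    fix P assume "P \<in> Spec - V x"
    hence P: "prime_ideal P" and xP: "x \<notin> P" unfolding Spec_def V_def by auto
    have PI: "is_ideal P" using P by (simp add: prime_ideal_def)
    define U where "U = {A \<in> H1 x. \<forall>p\<in>A. good P x p}"
    have memU: "cls x q \<in> U" if "good P x q" for q
      unfolding U_def using cls_H1 good_cls[OF P xP that] by blast
    have sub: "h1_submodule x U" unfolding h1_submodule_def
    proof (intro conjI ballI allI)
      show "U \<subseteq> H1 x" unfolding U_def by blast
      show "h1_zero x \<in> U" unfolding h1_zero_def
        by (rule memU) (unfold good_def, rule exI[of _ 0], simp add: ideal_zero[OF PI])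
    next
      fix A B assume "A \<in> U" "B \<in> U"
      hence AU: "A \<in> H1 x" "\<forall>p\<in>A. good P x p" and BU: "B \<in> H1 x" "\<forall>p\<in>B. good P x p"
        unfolding U_def by auto
      obtain a n where A: "A = cls x (a,n)" using AU(1) by (rule H1_cases)
      obtain b k where B: "B = cls x (b,k)" using BU(1) by (rule H1_cases)
      have gA: "good P x (a,n)" using AU(2) A cls_self by blast
      have gB: "good P x (b,k)" using BU(2) B cls_self by blast
      obtain c d where c: "a - x^n * c \<in> P" and d: "b - x^k * d \<in> P" using gA gB unfolding good_def by auto
      have "x^k * (a - x^n * c) + x^n * (b - x^k * d) \<in> P" using c d PI ideal_add ideal_mult by blast
      moreover have "x^k * (a - x^n * c) + x^n * (b - x^k * d) = (x^k*a + x^n*b) - x^(n+k) * (c + d)"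
        by (simp add: algebra_simps power_add)
      ultimately have "good P x (x^k*a + x^n*b, n+k)" unfolding good_def by auto
      thus "h1_add x A B \<in> U" using A B add_cls memU by metis
    next
      fix r A assume "A \<in> U"
      hence AU: "A \<in> H1 x" "\<forall>p\<in>A. good P x p" unfolding U_def by auto
      obtain a n where A: "A = cls x (a,n)" using AU(1) by (rule H1_cases)
      have gA: "good P x (a,n)" using AU(2) A cls_self by blast
      obtain c where c: "a - x^n * c \<in> P" using gA unfolding good_def by auto
      have "r * (a - x^n * c) \<in> P" using c PI ideal_mult by blast
      moreover have "r * (a - x^n * c) = r * a - x^n * (r * c)" by (simp add: algebra_simps)
      ultimately have "good P x (r*a, n)" unfolding good_def by auto
      thus "h1_smult x r A \<in> U" using A smult_cls memU by metis
    qed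
    have "P = h1_ann_quot x U"
    proof
      show "P \<subseteq> h1_ann_quot x U" unfolding h1_ann_quot_def
      proof (clarify)
        fix r A assume "r \<in> P" "A \<in> H1 x"
        then obtain a n where A: "A = cls x (a,n)" by (auto elim: H1_cases)
        have "a * r \<in> P" using \<open>r \<in> P\<close> PI ideal_mult by blast
        hence "r * a - x^n * 0 \<in> P" by (simp add: mult.commute)
        hence "good P x (r*a, n)" unfolding good_def fst_conv snd_conv by (rule exI)
        thus "h1_smult x r A \<in> U" using A smult_cls memU by metis
      qed
      show "h1_ann_quot x U \<subseteq> P"
      proof
        fix r assume "r \<in> h1_ann_quot x U"
        hence "h1_smult x r (cls x (1,n)) \<in> U" for n unfolding h1_ann_quot_def using cls_H1 by blast
        hence "cls x (r, n) \<in> U" for n using smult_cls[of x r 1 n] by (metis mult_1_right)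
        hence "good P x (r, n)" for n unfolding U_def using cls_self by blast
        hence "\<forall>n. \<exists>c. r - x^n * c \<in> P" unfolding good_def by auto
        thus "r \<in> P" using krull[OF assms P xP] by blast
      qed
    qed
    thus "P \<in> Att_H1 x" unfolding Att_H1_def using P sub by blast
  qed
qed

end
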